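(* Let $N$ and $M$ be $G$-graded near-rings with multiplicative identity. If every proper ideal of $N$ and every proper ideal of $M$ is a product of graded prime ideals, then every proper ideal of $N\times M$ is a product of graded prime ideals of $N\times M$.
   Context: A (right) near-ring is a set $N$ with two binary operations $+$ and $\cdot$ such that $(N,+)$ is a group (not necessarily abelian), $(N,\cdot)$ is a semigroup, and $(a+b)c=ac+bc$. An ideal of $N$ is a normal subgroup $I$ of $(N,+)$ such that $ni\in I$ and $(n+i)m-nm\in I$ for all $n,m\in N$, $i\in I$. For ideals $A_1,\dots,A_n$, the product $A_1\cdots A_n$ is the set of products $\{a_1\cdots a_n: a_i\in A_i\}$. Let $G$ be a multiplicative monoid with identity. $N$ is $G$-graded if there is a family $\{N_\sigma\}_{\sigma\in G}$ of normal subgroups of $(N,+)$ with $N=\bigoplus_{\sigma\in G}N_\sigma$ and $N_\sigma N_\tau\subseteq N_{\sigma\tau}$. For $X\subseteq N$, $X_g=X\cap N_g$. An ideal $I$ is graded if $I=\bigoplus_g I_g$. The direct product $N\times M$ has componentwise operations and is $G$-graded by $(N\times M)_g=N_g\times M_g$. For subsets $X,Y$, $XY=\{xy:x\in X,y\in Y\}$. A graded ideal $P$ is graded prime if $P\neq N$ and for all ideals $A,B$ of $N$ and all $g,h\in G$: $A_gB_h\subseteq P_{gh}$ implies $A_g\subseteq P_g$ or $B_h\subseteq P_h$. *)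

theory Defs
  imports "HOL-Algebra.Algebra"
begin

text \<open>The field one is only meaningful
  when one additionally assumes monoid R (near-ring with identity).\<close>

locale near_ring =
  fixes R (structure)
  assumes add_group: "group (add_monoid R)"
    and m_closed: "\<And>a b. \<lbrakk>a \<in> carrier R; b \<in> carrier R\<rbrakk> \<Longrightarrow> a \<otimes> b \<in> carrier R"
    and m_assoc: "\<And>a b c. \<lbrakk>a \<in> carrier R; b \<in> carrier R; c \<in> carrier R\<rbrakk>
        \<Longrightarrow> (a \<otimes> b) \<otimes> c = a \<otimes> (b \<otimes> c)"
    and right_distrib:
      "\<And>a b c. \<lbrakk>a \<in> carrier R; b \<in> carrier R; c \<in> carrier R\<rbrakk>
        \<Longrightarrow> (a \<oplus> b) \<otimes> c = a \<otimes> c \<oplus> b \<otimes> c"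

definition internal_direct_sum :: "('a, 'm) monoid_scheme \<Rightarrow> ('g \<Rightarrow> 'a set) \<Rightarrow> bool" where
  "internal_direct_sum A F \<longleftrightarrow>
     (\<forall>\<sigma>. F \<sigma> \<lhd> A) \<and>
     generate A (\<Union>\<sigma>. F \<sigma>) = carrier A \<and>
     (\<forall>\<sigma>. F \<sigma> \<inter> generate A (\<Union>\<tau>\<in>-{\<sigma>}. F \<tau>) = {\<one>\<^bsub>A\<^esub>})"

definition graded_near_ring :: "('a, 'm) ring_scheme \<Rightarrow> ('g::monoid_mult \<Rightarrow> 'a set) \<Rightarrow> bool" where
  "graded_near_ring R NG \<longleftrightarrow>
     near_ring R \<and>
     internal_direct_sum (add_monoid R) NG \<and>
     (\<forall>\<sigma> \<tau>. \<forall>x\<in>NG \<sigma>. \<forall>y\<in>NG \<tau>. x \<otimes>\<^bsub>R\<^esub> y \<in> NG (\<sigma> * \<tau>))"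

definition nr_ideal :: "('a, 'm) ring_scheme \<Rightarrow> 'a set \<Rightarrow> bool" where
  "nr_ideal R I \<longleftrightarrow>
     I \<lhd> add_monoid R \<and>
     (\<forall>n\<in>carrier R. \<forall>i\<in>I. n \<otimes>\<^bsub>R\<^esub> i \<in> I) \<and>
     (\<forall>n\<in>carrier R. \<forall>m\<in>carrier R. \<forall>i\<in>I.
        (n \<oplus>\<^bsub>R\<^esub> i) \<otimes>\<^bsub>R\<^esub> m \<ominus>\<^bsub>R\<^esub> (n \<otimes>\<^bsub>R\<^esub> m) \<in> I)"

definition graded_ideal :: "('a, 'm) ring_scheme \<Rightarrow> ('g \<Rightarrow> 'a set) \<Rightarrow> 'a set \<Rightarrow> bool" where
  "graded_ideal R NG I \<longleftrightarrow>
     nr_ideal R I \<and>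
     internal_direct_sum ((add_monoid R)\<lparr>carrier := I\<rparr>) (\<lambda>g. I \<inter> NG g)"

text \<open>Elementwise product XY = {xy : x in X, y in Y} is HOL-Algebra's set_mult (Coset.thy).\<close>

definition graded_prime :: "('a, 'm) ring_scheme \<Rightarrow> ('g::monoid_mult \<Rightarrow> 'a set) \<Rightarrow> 'a set \<Rightarrow> bool" where
  "graded_prime R NG P \<longleftrightarrow>
     graded_ideal R NG P \<and> P \<noteq> carrier R \<and>
     (\<forall>A B g h. nr_ideal R A \<longrightarrow> nr_ideal R B \<longrightarrow>
        set_mult R (A \<inter> NG g) (B \<inter> NG h) \<subseteq> P \<inter> NG (g * h) \<longrightarrow>
        A \<inter> NG g \<subseteq> P \<inter> NG g \<or> B \<inter> NG h \<subseteq> P \<inter> NG h)"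

fun ideal_list_prod :: "('a, 'm) ring_scheme \<Rightarrow> 'a set list \<Rightarrow> 'a set" where
  "ideal_list_prod R [] = {\<one>\<^bsub>R\<^esub>}"
| "ideal_list_prod R [A] = A"
| "ideal_list_prod R (A # As) = set_mult R A (ideal_list_prod R As)"

definition proper_ideals_prod_graded_primes :: "('a, 'm) ring_scheme \<Rightarrow> ('g::monoid_mult \<Rightarrow> 'a set) \<Rightarrow> bool" where
  "proper_ideals_prod_graded_primes R NG \<longleftrightarrow>
     (\<forall>I. nr_ideal R I \<and> I \<noteq> carrier R \<longrightarrow>
        (\<exists>Ps. Ps \<noteq> [] \<and> (\<forall>P\<in>set Ps. graded_prime R NG P) \<and> I = ideal_list_prod R Ps))"

definition nr_prod :: "('a, 'm) ring_scheme \<Rightarrow> ('b, 'n) ring_scheme \<Rightarrow> ('a \<times> 'b) ring" where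
  "nr_prod R S =
     \<lparr>carrier = carrier R \<times> carrier S,
      monoid.mult = (\<lambda>x y. (fst x \<otimes>\<^bsub>R\<^esub> fst y, snd x \<otimes>\<^bsub>S\<^esub> snd y)),
      one = (\<one>\<^bsub>R\<^esub>, \<one>\<^bsub>S\<^esub>),
      ring.zero = (\<zero>\<^bsub>R\<^esub>, \<zero>\<^bsub>S\<^esub>),
      ring.add = (\<lambda>x y. (fst x \<oplus>\<^bsub>R\<^esub> fst y, snd x \<oplus>\<^bsub>S\<^esub> snd y))\<rparr>"

definition prod_grading :: "('g \<Rightarrow> 'a set) \<Rightarrow> ('g \<Rightarrow> 'b set) \<Rightarrow> 'g \<Rightarrow> ('a \<times> 'b) set" where
  "prod_grading NG MG g = NG g \<times> MG g"

end

theory Submission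
  imports Defs
begin

lemma nr_prod_simps[simp]:
  "carrier (nr_prod R S) = carrier R \<times> carrier S"
  "x \<otimes>\<^bsub>nr_prod R S\<^esub> y = (fst x \<otimes>\<^bsub>R\<^esub> fst y, snd x \<otimes>\<^bsub>S\<^esub> snd y)"
  "x \<oplus>\<^bsub>nr_prod R S\<^esub> y = (fst x \<oplus>\<^bsub>R\<^esub> fst y, snd x \<oplus>\<^bsub>S\<^esub> snd y)"
  "\<zero>\<^bsub>nr_prod R S\<^esub> = (\<zero>\<^bsub>R\<^esub>, \<zero>\<^bsub>S\<^esub>)"
  "\<one>\<^bsub>nr_prod R S\<^esub> = (\<one>\<^bsub>R\<^esub>, \<one>\<^bsub>S\<^esub>)"
  by (simp_all add: nr_prod_def)

lemma add_monoid_nr_prod: "add_monoid (nr_prod R S) = add_monoid R \<times>\<times> add_monoid S"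
  by (simp add: nr_prod_def DirProd_def fun_eq_iff split_def)

lemma add_monoid_nr_prod_restr:
  "(add_monoid (nr_prod R S))\<lparr>carrier := U \<times> V\<rparr> = ((add_monoid R)\<lparr>carrier := U\<rparr>) \<times>\<times> ((add_monoid S)\<lparr>carrier := V\<rparr>)"
  by (simp add: nr_prod_def DirProd_def fun_eq_iff split_def)

lemma near_ring_zero_mult:
  assumes "near_ring R" "m \<in> carrier R"
  shows "\<zero>\<^bsub>R\<^esub> \<otimes>\<^bsub>R\<^esub> m = \<zero>\<^bsub>R\<^esub>"
proof -
  interpret A: group "add_monoid R" using assms near_ring.add_group by blast
  have z: "\<zero>\<^bsub>R\<^esub> \<in> carrier R" using A.one_closed by simp
  have c: "\<zero>\<^bsub>R\<^esub> \<otimes>\<^bsub>R\<^esub> m \<in> carrier R" using near_ring.m_closed[OF assms(1) z assms(2)] .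
  have "\<zero>\<^bsub>R\<^esub> \<otimes>\<^bsub>R\<^esub> m = (\<zero>\<^bsub>R\<^esub> \<oplus>\<^bsub>R\<^esub> \<zero>\<^bsub>R\<^esub>) \<otimes>\<^bsub>R\<^esub> m"
    using A.l_one[of "\<zero>\<^bsub>R\<^esub>"] z by simp
  also have "\<dots> = \<zero>\<^bsub>R\<^esub> \<otimes>\<^bsub>R\<^esub> m \<oplus>\<^bsub>R\<^esub> \<zero>\<^bsub>R\<^esub> \<otimes>\<^bsub>R\<^esub> m"
    using near_ring.right_distrib[OF assms(1) z z assms(2)] .
  finally have "\<zero>\<^bsub>R\<^esub> \<otimes>\<^bsub>R\<^esub> m \<oplus>\<^bsub>R\<^esub> \<zero>\<^bsub>R\<^esub> = \<zero>\<^bsub>R\<^esub> \<otimes>\<^bsub>R\<^esub> m \<oplus>\<^bsub>R\<^esub> \<zero>\<^bsub>R\<^esub> \<otimes>\<^bsub>R\<^esub> m"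
    using A.r_one[of "\<zero>\<^bsub>R\<^esub> \<otimes>\<^bsub>R\<^esub> m"] c by simp
  then show ?thesis using A.l_cancel[of "\<zero>\<^bsub>R\<^esub> \<otimes>\<^bsub>R\<^esub> m" "\<zero>\<^bsub>R\<^esub>" "\<zero>\<^bsub>R\<^esub> \<otimes>\<^bsub>R\<^esub> m"] c z by simp
qed


lemma generate_DirProd_left:
  assumes A: "group A" and B: "group B"
    and sub: "\<And>s. s \<in> T \<Longrightarrow> subgroup (F s) A \<and> subgroup (H s) B"
    and x: "x \<in> generate A (\<Union>s\<in>T. F s)"
  shows "(x, \<one>\<^bsub>B\<^esub>) \<in> generate (A \<times>\<times> B) (\<Union>s\<in>T. F s \<times> H s)"
  using x
proof (induction rule: generate.induct)
  case one
  then show ?case using generate.one[of "A \<times>\<times> B"] by simp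
next
  case (incl h)
  then obtain s where "s \<in> T" "h \<in> F s" by blast
  then have "(h, \<one>\<^bsub>B\<^esub>) \<in> F s \<times> H s" using sub[of s] subgroup.one_closed by blast
  then show ?case using \<open>s \<in> T\<close> by (blast intro: generate.incl)
next
  case (inv h)
  then obtain s where s: "s \<in> T" "h \<in> F s" by blast
  then have hc: "h \<in> carrier A" using sub subgroup.subset by blast
  have "(h, \<one>\<^bsub>B\<^esub>) \<in> F s \<times> H s" using s sub[of s] subgroup.one_closed by blast
  then have "inv\<^bsub>A \<times>\<times> B\<^esub> (h, \<one>\<^bsub>B\<^esub>) \<in> generate (A \<times>\<times> B) (\<Union>s\<in>T. F s \<times> H s)"
    using s by (blast intro: generate.inv)
  then show ?case using inv_DirProd[OF A B hc monoid.one_closed[OF group.is_monoid[OF B]]] monoid.inv_one[OF group.is_monoid[OF B]] by simp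
next
  case (eng h1 h2)
  have "(h1, \<one>\<^bsub>B\<^esub>) \<otimes>\<^bsub>A \<times>\<times> B\<^esub> (h2, \<one>\<^bsub>B\<^esub>) \<in> generate (A \<times>\<times> B) (\<Union>s\<in>T. F s \<times> H s)"
    by (rule generate.eng[OF eng.IH])
  moreover have "(h1, \<one>\<^bsub>B\<^esub>) \<otimes>\<^bsub>A \<times>\<times> B\<^esub> (h2, \<one>\<^bsub>B\<^esub>) = (h1 \<otimes>\<^bsub>A\<^esub> h2, \<one>\<^bsub>B\<^esub>)"
    using monoid.l_one[OF group.is_monoid[OF B] monoid.one_closed[OF group.is_monoid[OF B]]] by simp
  ultimately show ?case by simp
qed

lemma generate_DirProd_right:
  assumes A: "group A" and B: "group B"
    and sub: "\<And>s. s \<in> T \<Longrightarrow> subgroup (F s) A \<and> subgroup (H s) B"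
    and x: "x \<in> generate B (\<Union>s\<in>T. H s)"
  shows "(\<one>\<^bsub>A\<^esub>, x) \<in> generate (A \<times>\<times> B) (\<Union>s\<in>T. F s \<times> H s)"
  using x
proof (induction rule: generate.induct)
  case one
  then show ?case using generate.one[of "A \<times>\<times> B"] by simp
next
  case (incl h)
  then obtain s where "s \<in> T" "h \<in> H s" by blast
  then have "(\<one>\<^bsub>A\<^esub>, h) \<in> F s \<times> H s" using sub[of s] subgroup.one_closed by blast
  then show ?case using \<open>s \<in> T\<close> by (blast intro: generate.incl)
next
  case (inv h)
  then obtain s where s: "s \<in> T" "h \<in> H s" by blast
  then have hc: "h \<in> carrier B" using sub subgroup.subset by blast
  have "(\<one>\<^bsub>A\<^esub>, h) \<in> F s \<times> H s" using s sub[of s] subgroup.one_closed by blast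
  then have "inv\<^bsub>A \<times>\<times> B\<^esub> (\<one>\<^bsub>A\<^esub>, h) \<in> generate (A \<times>\<times> B) (\<Union>s\<in>T. F s \<times> H s)"
    using s by (blast intro: generate.inv)
  then show ?case using inv_DirProd[OF A B monoid.one_closed[OF group.is_monoid[OF A]] hc] monoid.inv_one[OF group.is_monoid[OF A]] by simp
next
  case (eng h1 h2)
  have "(\<one>\<^bsub>A\<^esub>, h1) \<otimes>\<^bsub>A \<times>\<times> B\<^esub> (\<one>\<^bsub>A\<^esub>, h2) \<in> generate (A \<times>\<times> B) (\<Union>s\<in>T. F s \<times> H s)"
    by (rule generate.eng[OF eng.IH])
  moreover have "(\<one>\<^bsub>A\<^esub>, h1) \<otimes>\<^bsub>A \<times>\<times> B\<^esub> (\<one>\<^bsub>A\<^esub>, h2) = (\<one>\<^bsub>A\<^esub>, h1 \<otimes>\<^bsub>B\<^esub> h2)"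
    using monoid.l_one[OF group.is_monoid[OF A] monoid.one_closed[OF group.is_monoid[OF A]]] by simp
  ultimately show ?case by simp
qed

lemma generate_DirProd:
  assumes A: "group A" and B: "group B"
    and sub: "\<And>s. s \<in> T \<Longrightarrow> subgroup (F s) A \<and> subgroup (H s) B"
  shows "generate (A \<times>\<times> B) (\<Union>s\<in>T. F s \<times> H s)
       = generate A (\<Union>s\<in>T. F s) \<times> generate B (\<Union>s\<in>T. H s)"
proof
  interpret AB: group "A \<times>\<times> B" using DirProd_group[OF A B] .
  have FA: "(\<Union>s\<in>T. F s) \<subseteq> carrier A" using sub subgroup.subset by blast
  have HB: "(\<Union>s\<in>T. H s) \<subseteq> carrier B" using sub subgroup.subset by blast
  have "subgroup (generate A (\<Union>s\<in>T. F s) \<times> generate B (\<Union>s\<in>T. H s)) (A \<times>\<times> B)"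
    using DirProd_subgroups[OF A group.generate_is_subgroup[OF A FA] B group.generate_is_subgroup[OF B HB]] .
  moreover have "(\<Union>s\<in>T. F s \<times> H s) \<subseteq> generate A (\<Union>s\<in>T. F s) \<times> generate B (\<Union>s\<in>T. H s)"
    by (auto intro: generate.incl)
  ultimately show "generate (A \<times>\<times> B) (\<Union>s\<in>T. F s \<times> H s)
       \<subseteq> generate A (\<Union>s\<in>T. F s) \<times> generate B (\<Union>s\<in>T. H s)"
    using AB.generate_subgroup_incl by blast
next
  show "generate A (\<Union>s\<in>T. F s) \<times> generate B (\<Union>s\<in>T. H s) \<subseteq> generate (A \<times>\<times> B) (\<Union>s\<in>T. F s \<times> H s)"
  proof clarify
    fix x y assume x: "x \<in> generate A (\<Union>s\<in>T. F s)" and y: "y \<in> generate B (\<Union>s\<in>T. H s)"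
    have FA: "(\<Union>s\<in>T. F s) \<subseteq> carrier A" using sub subgroup.subset by blast
    have HB: "(\<Union>s\<in>T. H s) \<subseteq> carrier B" using sub subgroup.subset by blast
    have xc: "x \<in> carrier A" using group.generate_in_carrier[OF A FA x] .
    have yc: "y \<in> carrier B" using group.generate_in_carrier[OF B HB y] .
    have "(x, \<one>\<^bsub>B\<^esub>) \<otimes>\<^bsub>A \<times>\<times> B\<^esub> (\<one>\<^bsub>A\<^esub>, y) \<in> generate (A \<times>\<times> B) (\<Union>s\<in>T. F s \<times> H s)"
      using generate.eng[OF generate_DirProd_left[OF A B sub x] generate_DirProd_right[OF A B sub y]] by blast
    then show "(x, y) \<in> generate (A \<times>\<times> B) (\<Union>s\<in>T. F s \<times> H s)"
      using xc yc monoid.r_one[OF group.is_monoid[OF A] xc] monoid.l_one[OF group.is_monoid[OF B] yc] by simp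
  qed
qed

lemma internal_direct_sum_DirProd:
  assumes A: "group A" and B: "group B"
    and FA: "internal_direct_sum A F" and HB: "internal_direct_sum B H"
  shows "internal_direct_sum (A \<times>\<times> B) (\<lambda>g. F g \<times> H g)"
proof -
  have nF: "\<And>s. F s \<lhd> A" using FA unfolding internal_direct_sum_def by blast
  have nH: "\<And>s. H s \<lhd> B" using HB unfolding internal_direct_sum_def by blast
  have sub: "\<And>s. s \<in> T \<Longrightarrow> subgroup (F s) A \<and> subgroup (H s) B" for T
    using normal_imp_subgroup[OF nF] normal_imp_subgroup[OF nH] by (intro conjI)
  have n: "\<forall>s. F s \<times> H s \<lhd> A \<times>\<times> B" using group.DirProd_normal[OF A B nF nH] by blast
  have gA: "generate A (\<Union>s. F s) = carrier A" using FA unfolding internal_direct_sum_def by blast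
  have gB: "generate B (\<Union>s. H s) = carrier B" using HB unfolding internal_direct_sum_def by blast
  have g: "generate (A \<times>\<times> B) (\<Union>s. F s \<times> H s) = carrier (A \<times>\<times> B)"
  proof -
    have "generate (A \<times>\<times> B) (\<Union>s\<in>UNIV. F s \<times> H s) = generate A (\<Union>s\<in>UNIV. F s) \<times> generate B (\<Union>s\<in>UNIV. H s)"
      by (rule generate_DirProd[OF A B sub])
    then show ?thesis using gA gB by simp
  qed
  have i: "(F s \<times> H s) \<inter> generate (A \<times>\<times> B) (\<Union>t\<in>-{s}. F t \<times> H t) = {\<one>\<^bsub>A \<times>\<times> B\<^esub>}" for s
  proof -
    have iA: "F s \<inter> generate A (\<Union>t\<in>-{s}. F t) = {\<one>\<^bsub>A\<^esub>}"
      using FA unfolding internal_direct_sum_def by blast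
    have iB: "H s \<inter> generate B (\<Union>t\<in>-{s}. H t) = {\<one>\<^bsub>B\<^esub>}"
      using HB unfolding internal_direct_sum_def by blast
    have "(F s \<times> H s) \<inter> generate (A \<times>\<times> B) (\<Union>t\<in>-{s}. F t \<times> H t)
        = (F s \<inter> generate A (\<Union>t\<in>-{s}. F t)) \<times> (H s \<inter> generate B (\<Union>t\<in>-{s}. H t))"
    proof -
      have "generate (A \<times>\<times> B) (\<Union>t\<in>-{s}. F t \<times> H t) = generate A (\<Union>t\<in>-{s}. F t) \<times> generate B (\<Union>t\<in>-{s}. H t)"
        by (rule generate_DirProd[OF A B sub])
      then show ?thesis by (simp only: Times_Int_Times)
    qed
    also have "\<dots> = {\<one>\<^bsub>A\<^esub>} \<times> {\<one>\<^bsub>B\<^esub>}" unfolding iA iB ..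
    finally show ?thesis by simp
  qed
  show ?thesis unfolding internal_direct_sum_def using n g i by blast
qed


lemma a_minus_nr_prod:
  assumes "group (add_monoid R)" "group (add_monoid S)"
    and "x \<in> carrier R \<times> carrier S" "y \<in> carrier R \<times> carrier S"
  shows "x \<ominus>\<^bsub>nr_prod R S\<^esub> y = (fst x \<ominus>\<^bsub>R\<^esub> fst y, snd x \<ominus>\<^bsub>S\<^esub> snd y)"
proof -
  obtain y1 y2 where y: "y = (y1, y2)" "y1 \<in> carrier R" "y2 \<in> carrier S" using assms(4) by auto
  have "\<ominus>\<^bsub>nr_prod R S\<^esub> y = (\<ominus>\<^bsub>R\<^esub> y1, \<ominus>\<^bsub>S\<^esub> y2)"
    unfolding a_inv_def add_monoid_nr_prod y(1)
    using inv_DirProd[OF assms(1,2), of y1 y2] y by simp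
  then show ?thesis unfolding a_minus_def using y by simp
qed

lemma nr_ideal_subset: "nr_ideal R I \<Longrightarrow> I \<subseteq> carrier R"
  unfolding nr_ideal_def using normal_imp_subgroup subgroup.subset by fastforce

lemma nr_ideal_zero: "nr_ideal R I \<Longrightarrow> \<zero>\<^bsub>R\<^esub> \<in> I"
  unfolding nr_ideal_def using normal_imp_subgroup subgroup.one_closed by fastforce

lemma nr_ideal_add: "nr_ideal R I \<Longrightarrow> a \<in> I \<Longrightarrow> b \<in> I \<Longrightarrow> a \<oplus>\<^bsub>R\<^esub> b \<in> I"
  unfolding nr_ideal_def using normal_imp_subgroup subgroup.m_closed by fastforce

lemma nr_ideal_right_mult:
  assumes nR: "near_ring R" and I: "nr_ideal R I" and i: "i \<in> I" and m: "m \<in> carrier R"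
  shows "i \<otimes>\<^bsub>R\<^esub> m \<in> I"
proof -
  interpret A: group "add_monoid R" using nR near_ring.add_group by blast
  have z: "\<zero>\<^bsub>R\<^esub> \<in> carrier R" using A.one_closed by simp
  have ic: "i \<in> carrier R" using nr_ideal_subset[OF I] i by blast
  have "(\<zero>\<^bsub>R\<^esub> \<oplus>\<^bsub>R\<^esub> i) \<otimes>\<^bsub>R\<^esub> m \<ominus>\<^bsub>R\<^esub> (\<zero>\<^bsub>R\<^esub> \<otimes>\<^bsub>R\<^esub> m) \<in> I"
    using I z m i unfolding nr_ideal_def by blast
  moreover have "\<zero>\<^bsub>R\<^esub> \<oplus>\<^bsub>R\<^esub> i = i" using A.l_one[of i] ic by simp
  moreover have "\<zero>\<^bsub>R\<^esub> \<otimes>\<^bsub>R\<^esub> m = \<zero>\<^bsub>R\<^esub>" using near_ring_zero_mult[OF nR m] .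
  moreover have "\<ominus>\<^bsub>R\<^esub> \<zero>\<^bsub>R\<^esub> = \<zero>\<^bsub>R\<^esub>" unfolding a_inv_def using A.inv_one by simp
  moreover have "i \<otimes>\<^bsub>R\<^esub> m \<in> carrier R" using near_ring.m_closed[OF nR ic m] .
  ultimately show ?thesis unfolding a_minus_def using A.r_one by simp
qed

lemma nr_ideal_carrier:
  assumes nR: "near_ring R"
  shows "nr_ideal R (carrier R)"
proof -
  interpret A: group "add_monoid R" using nR near_ring.add_group by blast
  have "carrier (add_monoid R) \<lhd> add_monoid R"
    unfolding A.normal_inv_iff using A.subgroup_self by (blast intro: A.m_closed A.inv_closed)
  then have "carrier R \<lhd> add_monoid R" by simp
  moreover have "(n \<oplus>\<^bsub>R\<^esub> i) \<otimes>\<^bsub>R\<^esub> m \<ominus>\<^bsub>R\<^esub> (n \<otimes>\<^bsub>R\<^esub> m) \<in> carrier R"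
    if "n \<in> carrier R" "m \<in> carrier R" "i \<in> carrier R" for n m i
  proof -
    have a: "n \<oplus>\<^bsub>R\<^esub> i \<in> carrier R" using A.m_closed that by simp
    have b: "(n \<oplus>\<^bsub>R\<^esub> i) \<otimes>\<^bsub>R\<^esub> m \<in> carrier R" using near_ring.m_closed[OF nR a that(2)] .
    have c: "n \<otimes>\<^bsub>R\<^esub> m \<in> carrier R" using near_ring.m_closed[OF nR that(1,2)] .
    have d: "\<ominus>\<^bsub>R\<^esub> (n \<otimes>\<^bsub>R\<^esub> m) \<in> carrier R" unfolding a_inv_def using A.inv_closed c by simp
    show ?thesis unfolding a_minus_def using A.m_closed b d by simp
  qed
  ultimately show ?thesis unfolding nr_ideal_def using near_ring.m_closed[OF nR] by blast
qed


lemma set_mult_nr_prod: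
  "set_mult (nr_prod R S) (U1 \<times> V1) (U2 \<times> V2) = set_mult R U1 U2 \<times> set_mult S V1 V2"
proof
  show "set_mult (nr_prod R S) (U1 \<times> V1) (U2 \<times> V2) \<subseteq> set_mult R U1 U2 \<times> set_mult S V1 V2"
    unfolding set_mult_def by fastforce
next
  show "set_mult R U1 U2 \<times> set_mult S V1 V2 \<subseteq> set_mult (nr_prod R S) (U1 \<times> V1) (U2 \<times> V2)"
  proof clarify
    fix a b assume a: "a \<in> set_mult R U1 U2" and b: "b \<in> set_mult S V1 V2"
    then obtain u1 u2 v1 v2 where u: "u1 \<in> U1" "u2 \<in> U2" "a = u1 \<otimes>\<^bsub>R\<^esub> u2"
      and v: "v1 \<in> V1" "v2 \<in> V2" "b = v1 \<otimes>\<^bsub>S\<^esub> v2" unfolding set_mult_def by blast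
    have "(u1, v1) \<otimes>\<^bsub>nr_prod R S\<^esub> (u2, v2) \<in> set_mult (nr_prod R S) (U1 \<times> V1) (U2 \<times> V2)"
      unfolding set_mult_def using u v by blast
    then show "(a, b) \<in> set_mult (nr_prod R S) (U1 \<times> V1) (U2 \<times> V2)" using u v by simp
  qed
qed

lemma ideal_list_prod_Cons: "xs \<noteq> [] \<Longrightarrow> ideal_list_prod R (p # xs) = set_mult R p (ideal_list_prod R xs)"
  by (cases xs) auto

lemma ideal_list_prod_pairs:
  "L \<noteq> [] \<Longrightarrow> ideal_list_prod (nr_prod R S) (map (\<lambda>(U, V). U \<times> V) L)
     = ideal_list_prod R (map fst L) \<times> ideal_list_prod S (map snd L)"
proof (induction L)
  case Nil
  then show ?case by simp
next
  case (Cons x xs)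
  show ?case
  proof (cases "xs = []")
    case True
    then show ?thesis by (cases x) simp
  next
    case False
    have "ideal_list_prod (nr_prod R S) (map (\<lambda>(U, V). U \<times> V) (x # xs))
       = set_mult (nr_prod R S) (fst x \<times> snd x) (ideal_list_prod (nr_prod R S) (map (\<lambda>(U, V). U \<times> V) xs))"
      using False by (cases x) (simp add: ideal_list_prod_Cons)
    also have "\<dots> = set_mult (nr_prod R S) (fst x \<times> snd x) (ideal_list_prod R (map fst xs) \<times> ideal_list_prod S (map snd xs))"
      using Cons.IH[OF False] by simp
    also have "\<dots> = ideal_list_prod R (map fst (x # xs)) \<times> ideal_list_prod S (map snd (x # xs))"
      using False by (simp add: set_mult_nr_prod ideal_list_prod_Cons)
    finally show ?thesis .
  qed
qed

lemma set_mult_ideal_carrier: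
  assumes nT: "near_ring T" and mT: "monoid T" and P: "nr_ideal T P"
  shows "set_mult T P (carrier T) = P"
proof
  show "set_mult T P (carrier T) \<subseteq> P"
    unfolding set_mult_def using nr_ideal_right_mult[OF nT P] by blast
next
  show "P \<subseteq> set_mult T P (carrier T)"
  proof
    fix p assume p: "p \<in> P"
    have "p \<otimes>\<^bsub>T\<^esub> \<one>\<^bsub>T\<^esub> = p" using monoid.r_one[OF mT] p nr_ideal_subset[OF P] by blast
    then show "p \<in> set_mult T P (carrier T)" unfolding set_mult_def using p monoid.one_closed[OF mT] by force
  qed
qed

lemma ideal_list_prod_replicate:
  assumes nT: "near_ring T" and mT: "monoid T" and k: "k > 0"
  shows "ideal_list_prod T (replicate k (carrier T)) = carrier T"
  using k
proof (induction k)
  case 0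
  then show ?case by simp
next
  case (Suc k)
  show ?case
  proof (cases "k = 0")
    case True
    then show ?thesis by simp
  next
    case False
    have "ideal_list_prod T (replicate (Suc k) (carrier T)) = set_mult T (carrier T) (carrier T)"
      using False Suc.IH by (simp add: ideal_list_prod_Cons)
    also have "\<dots> = carrier T" using set_mult_ideal_carrier[OF nT mT nr_ideal_carrier[OF nT]] .
    finally show ?thesis .
  qed
qed

lemma ideal_list_prod_append_replicate:
  assumes nT: "near_ring T" and mT: "monoid T" and k: "k > 0"
  shows "Ps \<noteq> [] \<Longrightarrow> \<forall>P\<in>set Ps. nr_ideal T P \<Longrightarrow>
     ideal_list_prod T (Ps @ replicate k (carrier T)) = ideal_list_prod T Ps"
proof (induction Ps)
  case Nil
  then show ?case by simp
next
  case (Cons p ps)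
  have rne: "replicate k (carrier T) \<noteq> []" using k by simp
  show ?case
  proof (cases "ps = []")
    case True
    have "ideal_list_prod T ((p # ps) @ replicate k (carrier T)) = set_mult T p (carrier T)"
      using True rne by (simp add: ideal_list_prod_Cons ideal_list_prod_replicate[OF nT mT k])
    also have "\<dots> = p" using set_mult_ideal_carrier[OF nT mT] Cons.prems by simp
    finally show ?thesis using True by simp
  next
    case False
    have "ideal_list_prod T ((p # ps) @ replicate k (carrier T)) = set_mult T p (ideal_list_prod T (ps @ replicate k (carrier T)))"
      using False by (simp add: ideal_list_prod_Cons)
    also have "\<dots> = set_mult T p (ideal_list_prod T ps)" using Cons.IH[OF False] Cons.prems by simp
    also have "\<dots> = ideal_list_prod T (p # ps)" using False by (simp add: ideal_list_prod_Cons)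
    finally show ?thesis .
  qed
qed

lemma ideal_list_prod_absorb:
  assumes nT: "near_ring T"
  shows "Qs \<noteq> [] \<Longrightarrow> \<forall>Q\<in>set Qs. nr_ideal T Q \<Longrightarrow>
     ideal_list_prod T Qs \<subseteq> carrier T \<and> (\<forall>m\<in>carrier T. \<forall>x\<in>ideal_list_prod T Qs. m \<otimes>\<^bsub>T\<^esub> x \<in> ideal_list_prod T Qs)"
proof (induction Qs)
  case Nil
  then show ?case by simp
next
  case (Cons q qs)
  have iq: "nr_ideal T q" using Cons.prems by simp
  show ?case
  proof (cases "qs = []")
    case True
    then show ?thesis using iq nr_ideal_subset[OF iq] unfolding nr_ideal_def by simp
  next
    case False
    have IH: "ideal_list_prod T qs \<subseteq> carrier T" using Cons.IH[OF False] Cons.prems by simp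
    have eq: "ideal_list_prod T (q # qs) = set_mult T q (ideal_list_prod T qs)"
      using False by (simp add: ideal_list_prod_Cons)
    have sub: "set_mult T q (ideal_list_prod T qs) \<subseteq> carrier T"
      unfolding set_mult_def using IH nr_ideal_subset[OF iq] near_ring.m_closed[OF nT] by blast
    have abs: "m \<otimes>\<^bsub>T\<^esub> x \<in> set_mult T q (ideal_list_prod T qs)"
      if m: "m \<in> carrier T" and x: "x \<in> set_mult T q (ideal_list_prod T qs)" for m x
    proof -
      obtain a y where a: "a \<in> q" and y: "y \<in> ideal_list_prod T qs" and xe: "x = a \<otimes>\<^bsub>T\<^esub> y"
        using x unfolding set_mult_def by blast
      have ac: "a \<in> carrier T" using a nr_ideal_subset[OF iq] by blast
      have yc: "y \<in> carrier T" using y IH by blast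
      have "m \<otimes>\<^bsub>T\<^esub> x = (m \<otimes>\<^bsub>T\<^esub> a) \<otimes>\<^bsub>T\<^esub> y" using near_ring.m_assoc[OF nT m ac yc] xe by simp
      moreover have "m \<otimes>\<^bsub>T\<^esub> a \<in> q" using iq m a unfolding nr_ideal_def by blast
      ultimately show ?thesis unfolding set_mult_def using y by blast
    qed
    show ?thesis unfolding eq using sub abs by blast
  qed
qed

lemma ideal_list_prod_replicate_append:
  assumes nT: "near_ring T" and mT: "monoid T"
    and ne: "Qs \<noteq> []" and iQ: "\<forall>Q\<in>set Qs. nr_ideal T Q"
  shows "ideal_list_prod T (replicate k (carrier T) @ Qs) = ideal_list_prod T Qs"
proof (induction k)
  case 0
  then show ?case by simp
next
  case (Suc k)
  have ab: "ideal_list_prod T Qs \<subseteq> carrier T"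
    "\<forall>m\<in>carrier T. \<forall>x\<in>ideal_list_prod T Qs. m \<otimes>\<^bsub>T\<^esub> x \<in> ideal_list_prod T Qs"
    using ideal_list_prod_absorb[OF nT ne iQ] by blast+
  have "ideal_list_prod T (replicate (Suc k) (carrier T) @ Qs) = set_mult T (carrier T) (ideal_list_prod T Qs)"
    using ne Suc.IH by (simp add: ideal_list_prod_Cons)
  also have "\<dots> = ideal_list_prod T Qs"
  proof
    show "set_mult T (carrier T) (ideal_list_prod T Qs) \<subseteq> ideal_list_prod T Qs"
      unfolding set_mult_def using ab(2) by blast
  next
    show "ideal_list_prod T Qs \<subseteq> set_mult T (carrier T) (ideal_list_prod T Qs)"
    proof
      fix x assume x: "x \<in> ideal_list_prod T Qs"
      have "\<one>\<^bsub>T\<^esub> \<otimes>\<^bsub>T\<^esub> x = x" using monoid.l_one[OF mT] x ab(1) by blast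
      then show "x \<in> set_mult T (carrier T) (ideal_list_prod T Qs)"
        unfolding set_mult_def using x monoid.one_closed[OF mT] by force
    qed
  qed
  finally show ?case .
qed

context
  fixes R :: "('a, 'm) ring_scheme" and S :: "('b, 'n) ring_scheme"
  assumes nR: "near_ring R" and nS: "near_ring S"
begin

lemma grpR: "group (add_monoid R)" using nR near_ring.add_group by blast
lemma grpS: "group (add_monoid S)" using nS near_ring.add_group by blast

lemma zR: "\<zero>\<^bsub>R\<^esub> \<in> carrier R" using group.is_monoid[OF grpR] monoid.one_closed by fastforce
lemma zS: "\<zero>\<^bsub>S\<^esub> \<in> carrier S" using group.is_monoid[OF grpS] monoid.one_closed by fastforce

lemma addR: "a \<in> carrier R \<Longrightarrow> b \<in> carrier R \<Longrightarrow> a \<oplus>\<^bsub>R\<^esub> b \<in> carrier R"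
  using monoid.m_closed[OF group.is_monoid[OF grpR], of a b] by simp
lemma addS: "a \<in> carrier S \<Longrightarrow> b \<in> carrier S \<Longrightarrow> a \<oplus>\<^bsub>S\<^esub> b \<in> carrier S"
  using monoid.m_closed[OF group.is_monoid[OF grpS], of a b] by simp
lemma mulR: "a \<in> carrier R \<Longrightarrow> b \<in> carrier R \<Longrightarrow> a \<otimes>\<^bsub>R\<^esub> b \<in> carrier R"
  using near_ring.m_closed[OF nR] by blast
lemma mulS: "a \<in> carrier S \<Longrightarrow> b \<in> carrier S \<Longrightarrow> a \<otimes>\<^bsub>S\<^esub> b \<in> carrier S"
  using near_ring.m_closed[OF nS] by blast

lemma nr_ideal_prod:
  assumes P: "nr_ideal R P" and Q: "nr_ideal S Q"
  shows "nr_ideal (nr_prod R S) (P \<times> Q)"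
proof -
  have nP: "P \<lhd> add_monoid R" and nQ: "Q \<lhd> add_monoid S" using P Q unfolding nr_ideal_def by auto
  have n: "P \<times> Q \<lhd> add_monoid (nr_prod R S)"
    unfolding add_monoid_nr_prod using group.DirProd_normal[OF grpR grpS nP nQ] .
  have l: "\<forall>n\<in>carrier (nr_prod R S). \<forall>i\<in>P \<times> Q. n \<otimes>\<^bsub>nr_prod R S\<^esub> i \<in> P \<times> Q"
    using P Q unfolding nr_ideal_def by auto
  have r: "(n \<oplus>\<^bsub>nr_prod R S\<^esub> i) \<otimes>\<^bsub>nr_prod R S\<^esub> m \<ominus>\<^bsub>nr_prod R S\<^esub> (n \<otimes>\<^bsub>nr_prod R S\<^esub> m) \<in> P \<times> Q"
    if n: "n \<in> carrier (nr_prod R S)" and m: "m \<in> carrier (nr_prod R S)" and i: "i \<in> P \<times> Q" for n m i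
  proof -
    have ic: "i \<in> carrier R \<times> carrier S" using i nr_ideal_subset[OF P] nr_ideal_subset[OF Q] by blast
    have x: "(n \<oplus>\<^bsub>nr_prod R S\<^esub> i) \<otimes>\<^bsub>nr_prod R S\<^esub> m \<in> carrier R \<times> carrier S"
      using n m ic by (auto intro!: addR addS mulR mulS)
    have y: "n \<otimes>\<^bsub>nr_prod R S\<^esub> m \<in> carrier R \<times> carrier S"
      using n m by (auto intro!: mulR mulS)
    show ?thesis unfolding a_minus_nr_prod[OF grpR grpS x y]
      using P Q n m i unfolding nr_ideal_def by auto
  qed
  show ?thesis unfolding nr_ideal_def using n l r by blast
qed

lemma ideal_fst_zero:
  assumes mR: "monoid R" and I: "nr_ideal (nr_prod R S) I" and p: "(a, b) \<in> I"
  shows "(a, \<zero>\<^bsub>S\<^esub>) \<in> I"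
proof -
  have pc: "(a, b) \<in> carrier R \<times> carrier S" using nr_ideal_subset[OF I] p by auto
  have "(\<one>\<^bsub>R\<^esub>, \<zero>\<^bsub>S\<^esub>) \<otimes>\<^bsub>nr_prod R S\<^esub> (a, b) \<in> I"
  proof -
      have lm: "\<And>n i. n \<in> carrier (nr_prod R S) \<Longrightarrow> i \<in> I \<Longrightarrow> n \<otimes>\<^bsub>nr_prod R S\<^esub> i \<in> I"
        using I unfolding nr_ideal_def by blast
      show ?thesis by (rule lm[OF _ p]) (simp add: monoid.one_closed[OF mR] zS)
    qed
  then show ?thesis using monoid.l_one[OF mR] near_ring_zero_mult[OF nS] pc by simp
qed

lemma ideal_snd_zero:
  assumes mS: "monoid S" and I: "nr_ideal (nr_prod R S) I" and p: "(a, b) \<in> I"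
  shows "(\<zero>\<^bsub>R\<^esub>, b) \<in> I"
proof -
  have pc: "(a, b) \<in> carrier R \<times> carrier S" using nr_ideal_subset[OF I] p by auto
  have "(\<zero>\<^bsub>R\<^esub>, \<one>\<^bsub>S\<^esub>) \<otimes>\<^bsub>nr_prod R S\<^esub> (a, b) \<in> I"
  proof -
      have lm: "\<And>n i. n \<in> carrier (nr_prod R S) \<Longrightarrow> i \<in> I \<Longrightarrow> n \<otimes>\<^bsub>nr_prod R S\<^esub> i \<in> I"
        using I unfolding nr_ideal_def by blast
      show ?thesis by (rule lm[OF _ p]) (simp add: monoid.one_closed[OF mS] zR)
    qed
  then show ?thesis using monoid.l_one[OF mS] near_ring_zero_mult[OF nR] pc by simp
qed

lemma ideal_decomp:
  assumes mR: "monoid R" and mS: "monoid S" and I: "nr_ideal (nr_prod R S) I"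
  shows "I = fst ` I \<times> snd ` I"
proof
  show "I \<subseteq> fst ` I \<times> snd ` I" by force
next
  show "fst ` I \<times> snd ` I \<subseteq> I"
  proof clarify
    fix a b b' a' assume ab: "(a, b) \<in> I" and ab': "(a', b') \<in> I"
    have 1: "(a, \<zero>\<^bsub>S\<^esub>) \<in> I" using ideal_fst_zero[OF mR I ab] .
    have 2: "(\<zero>\<^bsub>R\<^esub>, b') \<in> I" using ideal_snd_zero[OF mS I ab'] .
    have ac: "a \<in> carrier R" and bc: "b' \<in> carrier S" using nr_ideal_subset[OF I] ab ab' by auto
    have "(a, \<zero>\<^bsub>S\<^esub>) \<oplus>\<^bsub>nr_prod R S\<^esub> (\<zero>\<^bsub>R\<^esub>, b') \<in> I"
      using nr_ideal_add[OF I 1 2] .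
    moreover have "a \<oplus>\<^bsub>R\<^esub> \<zero>\<^bsub>R\<^esub> = a" using monoid.r_one[OF group.is_monoid[OF grpR], of a] ac by simp
    moreover have "\<zero>\<^bsub>S\<^esub> \<oplus>\<^bsub>S\<^esub> b' = b'" using monoid.l_one[OF group.is_monoid[OF grpS], of b'] bc by simp
    ultimately show "(fst (a, b), snd (a', b')) \<in> I" by simp
  qed
qed

lemma hom_fst: "group_hom (add_monoid R \<times>\<times> add_monoid S) (add_monoid R) fst"
  unfolding group_hom_def group_hom_axioms_def hom_def
  using DirProd_group[OF grpR grpS] grpR by (auto simp: mult_DirProd')

lemma hom_snd: "group_hom (add_monoid R \<times>\<times> add_monoid S) (add_monoid S) snd"
  unfolding group_hom_def group_hom_axioms_def hom_def
  using DirProd_group[OF grpR grpS] grpS by (auto simp: mult_DirProd')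

lemma nr_ideal_fst:
  assumes mR: "monoid R" and I: "nr_ideal (nr_prod R S) I"
  shows "nr_ideal R (fst ` I)"
proof -
  have nI: "I \<lhd> add_monoid R \<times>\<times> add_monoid S" using I unfolding nr_ideal_def add_monoid_nr_prod by blast
  have surj: "fst ` carrier (add_monoid R \<times>\<times> add_monoid S) = carrier (add_monoid R)"
    using zS by force
  have n: "fst ` I \<lhd> add_monoid R"
    using normal.surj_hom_normal_subgroup[OF nI hom_fst surj] .
  have lm: "\<And>n i. n \<in> carrier (nr_prod R S) \<Longrightarrow> i \<in> I \<Longrightarrow> n \<otimes>\<^bsub>nr_prod R S\<^esub> i \<in> I"
    using I unfolding nr_ideal_def by blast
  have rm: "\<And>n m i. n \<in> carrier (nr_prod R S) \<Longrightarrow> m \<in> carrier (nr_prod R S) \<Longrightarrow> i \<in> I \<Longrightarrow>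
     (n \<oplus>\<^bsub>nr_prod R S\<^esub> i) \<otimes>\<^bsub>nr_prod R S\<^esub> m \<ominus>\<^bsub>nr_prod R S\<^esub> (n \<otimes>\<^bsub>nr_prod R S\<^esub> m) \<in> I"
    using I unfolding nr_ideal_def by blast
  have l: "n \<otimes>\<^bsub>R\<^esub> x \<in> fst ` I" if nc: "n \<in> carrier R" and xI: "x \<in> fst ` I" for n x
  proof -
    obtain p where p: "p \<in> I" "x = fst p" using xI by blast
    have "(n, \<zero>\<^bsub>S\<^esub>) \<otimes>\<^bsub>nr_prod R S\<^esub> p \<in> I" using lm[of "(n, \<zero>\<^bsub>S\<^esub>)" p] p(1) nc zS by simp
    then show ?thesis using p by force
  qed
  have r: "(n \<oplus>\<^bsub>R\<^esub> x) \<otimes>\<^bsub>R\<^esub> m \<ominus>\<^bsub>R\<^esub> (n \<otimes>\<^bsub>R\<^esub> m) \<in> fst ` I"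
    if nm: "n \<in> carrier R" "m \<in> carrier R" and x: "x \<in> fst ` I" for n m x
  proof -
    obtain p where p: "p \<in> I" "x = fst p" using x by blast
    have pc: "p \<in> carrier R \<times> carrier S" using nr_ideal_subset[OF I] p by auto
    have a: "((n, \<zero>\<^bsub>S\<^esub>) \<oplus>\<^bsub>nr_prod R S\<^esub> p) \<otimes>\<^bsub>nr_prod R S\<^esub> (m, \<zero>\<^bsub>S\<^esub>) \<in> carrier R \<times> carrier S"
      using nm pc zS by (auto intro!: addR addS mulR mulS)
    have b: "(n, \<zero>\<^bsub>S\<^esub>) \<otimes>\<^bsub>nr_prod R S\<^esub> (m, \<zero>\<^bsub>S\<^esub>) \<in> carrier R \<times> carrier S"
      using nm zS by (auto intro!: mulR mulS)
    have "((n, \<zero>\<^bsub>S\<^esub>) \<oplus>\<^bsub>nr_prod R S\<^esub> p) \<otimes>\<^bsub>nr_prod R S\<^esub> (m, \<zero>\<^bsub>S\<^esub>) \<ominus>\<^bsub>nr_prod R S\<^esub> ((n, \<zero>\<^bsub>S\<^esub>) \<otimes>\<^bsub>nr_prod R S\<^esub> (m, \<zero>\<^bsub>S\<^esub>)) \<in> I"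
      using rm[of "(n, \<zero>\<^bsub>S\<^esub>)" "(m, \<zero>\<^bsub>S\<^esub>)" p] p(1) nm zS by simp
    then have "fst (((n, \<zero>\<^bsub>S\<^esub>) \<oplus>\<^bsub>nr_prod R S\<^esub> p) \<otimes>\<^bsub>nr_prod R S\<^esub> (m, \<zero>\<^bsub>S\<^esub>) \<ominus>\<^bsub>nr_prod R S\<^esub> ((n, \<zero>\<^bsub>S\<^esub>) \<otimes>\<^bsub>nr_prod R S\<^esub> (m, \<zero>\<^bsub>S\<^esub>))) \<in> fst ` I"
      by blast
    then show ?thesis unfolding a_minus_nr_prod[OF grpR grpS a b] using p by simp
  qed
  show ?thesis unfolding nr_ideal_def using n l r by blast
qed

lemma nr_ideal_snd:
  assumes mS: "monoid S" and I: "nr_ideal (nr_prod R S) I"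
  shows "nr_ideal S (snd ` I)"
proof -
  have nI: "I \<lhd> add_monoid R \<times>\<times> add_monoid S" using I unfolding nr_ideal_def add_monoid_nr_prod by blast
  have surj: "snd ` carrier (add_monoid R \<times>\<times> add_monoid S) = carrier (add_monoid S)"
    using zR by force
  have n: "snd ` I \<lhd> add_monoid S"
    using normal.surj_hom_normal_subgroup[OF nI hom_snd surj] .
  have lm: "\<And>n i. n \<in> carrier (nr_prod R S) \<Longrightarrow> i \<in> I \<Longrightarrow> n \<otimes>\<^bsub>nr_prod R S\<^esub> i \<in> I"
    using I unfolding nr_ideal_def by blast
  have rm: "\<And>n m i. n \<in> carrier (nr_prod R S) \<Longrightarrow> m \<in> carrier (nr_prod R S) \<Longrightarrow> i \<in> I \<Longrightarrow>
     (n \<oplus>\<^bsub>nr_prod R S\<^esub> i) \<otimes>\<^bsub>nr_prod R S\<^esub> m \<ominus>\<^bsub>nr_prod R S\<^esub> (n \<otimes>\<^bsub>nr_prod R S\<^esub> m) \<in> I"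
    using I unfolding nr_ideal_def by blast
  have l: "n \<otimes>\<^bsub>S\<^esub> x \<in> snd ` I" if nc: "n \<in> carrier S" and xI: "x \<in> snd ` I" for n x
  proof -
    obtain p where p: "p \<in> I" "x = snd p" using xI by blast
    have "(\<zero>\<^bsub>R\<^esub>, n) \<otimes>\<^bsub>nr_prod R S\<^esub> p \<in> I" using lm[of "(\<zero>\<^bsub>R\<^esub>, n)" p] p(1) nc zR by simp
    then show ?thesis using p by force
  qed
  have r: "(n \<oplus>\<^bsub>S\<^esub> x) \<otimes>\<^bsub>S\<^esub> m \<ominus>\<^bsub>S\<^esub> (n \<otimes>\<^bsub>S\<^esub> m) \<in> snd ` I"
    if nm: "n \<in> carrier S" "m \<in> carrier S" and x: "x \<in> snd ` I" for n m x
  proof -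
    obtain p where p: "p \<in> I" "x = snd p" using x by blast
    have pc: "p \<in> carrier R \<times> carrier S" using nr_ideal_subset[OF I] p by auto
    have a: "((\<zero>\<^bsub>R\<^esub>, n) \<oplus>\<^bsub>nr_prod R S\<^esub> p) \<otimes>\<^bsub>nr_prod R S\<^esub> (\<zero>\<^bsub>R\<^esub>, m) \<in> carrier R \<times> carrier S"
      using nm pc zR by (auto intro!: addR addS mulR mulS)
    have b: "(\<zero>\<^bsub>R\<^esub>, n) \<otimes>\<^bsub>nr_prod R S\<^esub> (\<zero>\<^bsub>R\<^esub>, m) \<in> carrier R \<times> carrier S"
      using nm zR by (auto intro!: mulR mulS)
    have "((\<zero>\<^bsub>R\<^esub>, n) \<oplus>\<^bsub>nr_prod R S\<^esub> p) \<otimes>\<^bsub>nr_prod R S\<^esub> (\<zero>\<^bsub>R\<^esub>, m) \<ominus>\<^bsub>nr_prod R S\<^esub> ((\<zero>\<^bsub>R\<^esub>, n) \<otimes>\<^bsub>nr_prod R S\<^esub> (\<zero>\<^bsub>R\<^esub>, m)) \<in> I"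
      using rm[of "(\<zero>\<^bsub>R\<^esub>, n)" "(\<zero>\<^bsub>R\<^esub>, m)" p] p(1) nm zR by simp
    then have "snd (((\<zero>\<^bsub>R\<^esub>, n) \<oplus>\<^bsub>nr_prod R S\<^esub> p) \<otimes>\<^bsub>nr_prod R S\<^esub> (\<zero>\<^bsub>R\<^esub>, m) \<ominus>\<^bsub>nr_prod R S\<^esub> ((\<zero>\<^bsub>R\<^esub>, n) \<otimes>\<^bsub>nr_prod R S\<^esub> (\<zero>\<^bsub>R\<^esub>, m))) \<in> snd ` I"
      by blast
    then show ?thesis unfolding a_minus_nr_prod[OF grpR grpS a b] using p by simp
  qed
  show ?thesis unfolding nr_ideal_def using n l r by blast
qed

lemma graded_zero_R: "graded_near_ring R NG \<Longrightarrow> \<zero>\<^bsub>R\<^esub> \<in> NG g"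
  unfolding graded_near_ring_def internal_direct_sum_def
  using normal_imp_subgroup subgroup.one_closed by fastforce

lemma graded_sub_R: "graded_near_ring R NG \<Longrightarrow> NG g \<subseteq> carrier R"
  unfolding graded_near_ring_def internal_direct_sum_def
  using normal_imp_subgroup subgroup.subset by fastforce

lemma graded_zero_S: "graded_near_ring S MG \<Longrightarrow> \<zero>\<^bsub>S\<^esub> \<in> MG g"
  unfolding graded_near_ring_def internal_direct_sum_def
  using normal_imp_subgroup subgroup.one_closed by fastforce

lemma graded_sub_S: "graded_near_ring S MG \<Longrightarrow> MG g \<subseteq> carrier S"
  unfolding graded_near_ring_def internal_direct_sum_def
  using normal_imp_subgroup subgroup.subset by fastforce

lemma graded_prime_left:
  assumes mR: "monoid R" and gS: "graded_near_ring S MG" and P: "graded_prime R NG P"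
  shows "graded_prime (nr_prod R S) (prod_grading NG MG) (P \<times> carrier S)"
proof -
  have gP: "graded_ideal R NG P" and Pne: "P \<noteq> carrier R"
    and Pprime: "\<And>A B g h. nr_ideal R A \<Longrightarrow> nr_ideal R B \<Longrightarrow>
        set_mult R (A \<inter> NG g) (B \<inter> NG h) \<subseteq> P \<inter> NG (g * h) \<Longrightarrow>
        A \<inter> NG g \<subseteq> P \<inter> NG g \<or> B \<inter> NG h \<subseteq> P \<inter> NG h"
  proof -
    have "graded_ideal R NG P \<and> P \<noteq> carrier R \<and>
     (\<forall>A B g h. nr_ideal R A \<longrightarrow> nr_ideal R B \<longrightarrow>
        set_mult R (A \<inter> NG g) (B \<inter> NG h) \<subseteq> P \<inter> NG (g * h) \<longrightarrow>
        A \<inter> NG g \<subseteq> P \<inter> NG g \<or> B \<inter> NG h \<subseteq> P \<inter> NG h)" using P unfolding graded_prime_def .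
    then show "graded_ideal R NG P" "P \<noteq> carrier R" "\<And>A B g h. nr_ideal R A \<Longrightarrow> nr_ideal R B \<Longrightarrow>
        set_mult R (A \<inter> NG g) (B \<inter> NG h) \<subseteq> P \<inter> NG (g * h) \<Longrightarrow>
        A \<inter> NG g \<subseteq> P \<inter> NG g \<or> B \<inter> NG h \<subseteq> P \<inter> NG h" by blast+
  qed
  have iP: "nr_ideal R P" and dP: "internal_direct_sum ((add_monoid R)\<lparr>carrier := P\<rparr>) (\<lambda>g. P \<inter> NG g)"
    using gP unfolding graded_ideal_def by blast+
  have Psub: "P \<subseteq> carrier R" using nr_ideal_subset[OF iP] .
  have ideal: "nr_ideal (nr_prod R S) (P \<times> carrier S)"
    using nr_ideal_prod[OF iP nr_ideal_carrier[OF nS]] .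
  have subP: "subgroup P (add_monoid R)" using iP unfolding nr_ideal_def using normal_imp_subgroup by blast
  have grA: "group ((add_monoid R)\<lparr>carrier := P\<rparr>)" using group.subgroup_imp_group[OF grpR subP] .
  have eqB: "(add_monoid S)\<lparr>carrier := carrier S\<rparr> = add_monoid S" by simp
  have famB: "(\<lambda>g. carrier S \<inter> MG g) = MG" using graded_sub_S[OF gS] by blast
  have dS: "internal_direct_sum (add_monoid S) MG" using gS unfolding graded_near_ring_def by blast
  have dB: "internal_direct_sum ((add_monoid S)\<lparr>carrier := carrier S\<rparr>) (\<lambda>g. carrier S \<inter> MG g)"
    unfolding eqB famB using dS .
  have grB: "group ((add_monoid S)\<lparr>carrier := carrier S\<rparr>)" unfolding eqB using grpS .
  have fam: "(\<lambda>g. (P \<times> carrier S) \<inter> prod_grading NG MG g) = (\<lambda>g. (P \<inter> NG g) \<times> (carrier S \<inter> MG g))"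
    unfolding prod_grading_def by auto
  have dsum: "internal_direct_sum ((add_monoid (nr_prod R S))\<lparr>carrier := P \<times> carrier S\<rparr>)
      (\<lambda>g. (P \<times> carrier S) \<inter> prod_grading NG MG g)"
    unfolding fam add_monoid_nr_prod_restr using internal_direct_sum_DirProd[OF grA grB dP dB] .
  have gI: "graded_ideal (nr_prod R S) (prod_grading NG MG) (P \<times> carrier S)"
    unfolding graded_ideal_def using ideal dsum by blast
  have ne: "P \<times> carrier S \<noteq> carrier (nr_prod R S)"
  proof
    assume "P \<times> carrier S = carrier (nr_prod R S)"
    then have "P \<times> carrier S = carrier R \<times> carrier S" by simp
    then have "carrier R \<subseteq> P" using zS by blast
    then show False using Psub Pne by blast
  qed
  have prime: "A \<inter> prod_grading NG MG g \<subseteq> (P \<times> carrier S) \<inter> prod_grading NG MG g \<or>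
               B \<inter> prod_grading NG MG h \<subseteq> (P \<times> carrier S) \<inter> prod_grading NG MG h"
    if iA: "nr_ideal (nr_prod R S) A" and iB: "nr_ideal (nr_prod R S) B"
      and incl: "set_mult (nr_prod R S) (A \<inter> prod_grading NG MG g) (B \<inter> prod_grading NG MG h)
           \<subseteq> (P \<times> carrier S) \<inter> prod_grading NG MG (g * h)" for A B g h
  proof -
    have iA1: "nr_ideal R (fst ` A)" using nr_ideal_fst[OF mR iA] .
    have iB1: "nr_ideal R (fst ` B)" using nr_ideal_fst[OF mR iB] .
    have "set_mult R (fst ` A \<inter> NG g) (fst ` B \<inter> NG h) \<subseteq> P \<inter> NG (g * h)"
    proof
      fix z assume "z \<in> set_mult R (fst ` A \<inter> NG g) (fst ` B \<inter> NG h)"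
      then obtain x y where x: "x \<in> fst ` A" "x \<in> NG g" and y: "y \<in> fst ` B" "y \<in> NG h"
        and z: "z = x \<otimes>\<^bsub>R\<^esub> y" unfolding set_mult_def by blast
      obtain b where xb: "(x, b) \<in> A" using x(1) by force
      obtain c where yc: "(y, c) \<in> B" using y(1) by force
      have xA: "(x, \<zero>\<^bsub>S\<^esub>) \<in> A \<inter> prod_grading NG MG g"
        using ideal_fst_zero[OF mR iA xb] x(2) graded_zero_S[OF gS] unfolding prod_grading_def by blast
      have yB: "(y, \<zero>\<^bsub>S\<^esub>) \<in> B \<inter> prod_grading NG MG h"
        using ideal_fst_zero[OF mR iB yc] y(2) graded_zero_S[OF gS] unfolding prod_grading_def by blast
      have "(x, \<zero>\<^bsub>S\<^esub>) \<otimes>\<^bsub>nr_prod R S\<^esub> (y, \<zero>\<^bsub>S\<^esub>)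
            \<in> set_mult (nr_prod R S) (A \<inter> prod_grading NG MG g) (B \<inter> prod_grading NG MG h)"
        unfolding set_mult_def using xA yB by blast
      then have "(x, \<zero>\<^bsub>S\<^esub>) \<otimes>\<^bsub>nr_prod R S\<^esub> (y, \<zero>\<^bsub>S\<^esub>) \<in> (P \<times> carrier S) \<inter> prod_grading NG MG (g * h)"
        using incl by blast
      then show "z \<in> P \<inter> NG (g * h)" using z unfolding prod_grading_def by simp
    qed
    then have "fst ` A \<inter> NG g \<subseteq> P \<inter> NG g \<or> fst ` B \<inter> NG h \<subseteq> P \<inter> NG h"
      using Pprime[OF iA1 iB1] by blast
    moreover have "A \<subseteq> carrier R \<times> carrier S" "B \<subseteq> carrier R \<times> carrier S"
      using nr_ideal_subset[OF iA] nr_ideal_subset[OF iB] by auto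
    moreover have c: "A' \<inter> prod_grading NG MG k \<subseteq> (P \<times> carrier S) \<inter> prod_grading NG MG k"
      if h1: "fst ` A' \<inter> NG k \<subseteq> P \<inter> NG k" and AS: "A' \<subseteq> carrier R \<times> carrier S" for A' k
    proof
      fix p assume p: "p \<in> A' \<inter> prod_grading NG MG k"
      have "fst p \<in> fst ` A' \<inter> NG k" using p unfolding prod_grading_def by (auto simp: mem_Times_iff)
      then have "fst p \<in> P" using h1 by blast
      moreover have "snd p \<in> carrier S" using p AS by (auto simp: mem_Times_iff)
      ultimately show "p \<in> (P \<times> carrier S) \<inter> prod_grading NG MG k" using p by (auto simp: mem_Times_iff)
    qed
    ultimately show ?thesis by blast
  qed
  show ?thesis unfolding graded_prime_def
  proof (intro conjI allI impI)
    show "graded_ideal (nr_prod R S) (prod_grading NG MG) (P \<times> carrier S)" by (rule gI)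
    show "P \<times> carrier S \<noteq> carrier (nr_prod R S)" by (rule ne)
  next
    fix A B g h
    assume "nr_ideal (nr_prod R S) A" "nr_ideal (nr_prod R S) B"
      "A \<inter> prod_grading NG MG g <#>\<^bsub>nr_prod R S\<^esub> B \<inter> prod_grading NG MG h
         \<subseteq> P \<times> carrier S \<inter> prod_grading NG MG (g * h)"
    then show "A \<inter> prod_grading NG MG g \<subseteq> P \<times> carrier S \<inter> prod_grading NG MG g \<or>
           B \<inter> prod_grading NG MG h \<subseteq> P \<times> carrier S \<inter> prod_grading NG MG h"
      by (rule prime)
  qed
qed

lemma graded_prime_right:
  assumes mS: "monoid S" and gR: "graded_near_ring R NG" and Q: "graded_prime S MG Q"
  shows "graded_prime (nr_prod R S) (prod_grading NG MG) (carrier R \<times> Q)"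
proof -
  have gQ: "graded_ideal S MG Q" and Qne: "Q \<noteq> carrier S"
    and Qprime: "\<And>A B g h. nr_ideal S A \<Longrightarrow> nr_ideal S B \<Longrightarrow>
        set_mult S (A \<inter> MG g) (B \<inter> MG h) \<subseteq> Q \<inter> MG (g * h) \<Longrightarrow>
        A \<inter> MG g \<subseteq> Q \<inter> MG g \<or> B \<inter> MG h \<subseteq> Q \<inter> MG h"
  proof -
    have "graded_ideal S MG Q \<and> Q \<noteq> carrier S \<and>
     (\<forall>A B g h. nr_ideal S A \<longrightarrow> nr_ideal S B \<longrightarrow>
        set_mult S (A \<inter> MG g) (B \<inter> MG h) \<subseteq> Q \<inter> MG (g * h) \<longrightarrow>
        A \<inter> MG g \<subseteq> Q \<inter> MG g \<or> B \<inter> MG h \<subseteq> Q \<inter> MG h)" using Q unfolding graded_prime_def .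
    then show "graded_ideal S MG Q" "Q \<noteq> carrier S" "\<And>A B g h. nr_ideal S A \<Longrightarrow> nr_ideal S B \<Longrightarrow>
        set_mult S (A \<inter> MG g) (B \<inter> MG h) \<subseteq> Q \<inter> MG (g * h) \<Longrightarrow>
        A \<inter> MG g \<subseteq> Q \<inter> MG g \<or> B \<inter> MG h \<subseteq> Q \<inter> MG h" by blast+
  qed
  have iQ: "nr_ideal S Q" and dQ: "internal_direct_sum ((add_monoid S)\<lparr>carrier := Q\<rparr>) (\<lambda>g. Q \<inter> MG g)"
    using gQ unfolding graded_ideal_def by blast+
  have Qsub: "Q \<subseteq> carrier S" using nr_ideal_subset[OF iQ] .
  have ideal: "nr_ideal (nr_prod R S) (carrier R \<times> Q)"
    using nr_ideal_prod[OF nr_ideal_carrier[OF nR] iQ] .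
  have subQ: "subgroup Q (add_monoid S)" using iQ unfolding nr_ideal_def using normal_imp_subgroup by blast
  have grB: "group ((add_monoid S)\<lparr>carrier := Q\<rparr>)" using group.subgroup_imp_group[OF grpS subQ] .
  have eqA: "(add_monoid R)\<lparr>carrier := carrier R\<rparr> = add_monoid R" by simp
  have famA: "(\<lambda>g. carrier R \<inter> NG g) = NG" using graded_sub_R[OF gR] by blast
  have dR: "internal_direct_sum (add_monoid R) NG" using gR unfolding graded_near_ring_def by blast
  have dA: "internal_direct_sum ((add_monoid R)\<lparr>carrier := carrier R\<rparr>) (\<lambda>g. carrier R \<inter> NG g)"
    unfolding eqA famA using dR .
  have grA: "group ((add_monoid R)\<lparr>carrier := carrier R\<rparr>)" unfolding eqA using grpR .
  have fam: "(\<lambda>g. (carrier R \<times> Q) \<inter> prod_grading NG MG g) = (\<lambda>g. (carrier R \<inter> NG g) \<times> (Q \<inter> MG g))"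
    unfolding prod_grading_def by auto
  have dsum: "internal_direct_sum ((add_monoid (nr_prod R S))\<lparr>carrier := carrier R \<times> Q\<rparr>)
      (\<lambda>g. (carrier R \<times> Q) \<inter> prod_grading NG MG g)"
    unfolding fam add_monoid_nr_prod_restr using internal_direct_sum_DirProd[OF grA grB dA dQ] .
  have gI: "graded_ideal (nr_prod R S) (prod_grading NG MG) (carrier R \<times> Q)"
    unfolding graded_ideal_def using ideal dsum by blast
  have ne: "carrier R \<times> Q \<noteq> carrier (nr_prod R S)"
  proof
    assume "carrier R \<times> Q = carrier (nr_prod R S)"
    then have "carrier R \<times> Q = carrier R \<times> carrier S" by simp
    then have "carrier S \<subseteq> Q" using zR by blast
    then show False using Qsub Qne by blast
  qed
  have prime: "A \<inter> prod_grading NG MG g \<subseteq> (carrier R \<times> Q) \<inter> prod_grading NG MG g \<or>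
               B \<inter> prod_grading NG MG h \<subseteq> (carrier R \<times> Q) \<inter> prod_grading NG MG h"
    if iA: "nr_ideal (nr_prod R S) A" and iB: "nr_ideal (nr_prod R S) B"
      and incl: "set_mult (nr_prod R S) (A \<inter> prod_grading NG MG g) (B \<inter> prod_grading NG MG h)
           \<subseteq> (carrier R \<times> Q) \<inter> prod_grading NG MG (g * h)" for A B g h
  proof -
    have iA1: "nr_ideal S (snd ` A)" using nr_ideal_snd[OF mS iA] .
    have iB1: "nr_ideal S (snd ` B)" using nr_ideal_snd[OF mS iB] .
    have "set_mult S (snd ` A \<inter> MG g) (snd ` B \<inter> MG h) \<subseteq> Q \<inter> MG (g * h)"
    proof
      fix z assume "z \<in> set_mult S (snd ` A \<inter> MG g) (snd ` B \<inter> MG h)"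
      then obtain x y where x: "x \<in> snd ` A" "x \<in> MG g" and y: "y \<in> snd ` B" "y \<in> MG h"
        and z: "z = x \<otimes>\<^bsub>S\<^esub> y" unfolding set_mult_def by blast
      obtain b where xb: "(b, x) \<in> A" using x(1) by force
      obtain c where yc: "(c, y) \<in> B" using y(1) by force
      have xA: "(\<zero>\<^bsub>R\<^esub>, x) \<in> A \<inter> prod_grading NG MG g"
        using ideal_snd_zero[OF mS iA xb] x(2) graded_zero_R[OF gR] unfolding prod_grading_def by blast
      have yB: "(\<zero>\<^bsub>R\<^esub>, y) \<in> B \<inter> prod_grading NG MG h"
        using ideal_snd_zero[OF mS iB yc] y(2) graded_zero_R[OF gR] unfolding prod_grading_def by blast
      have "(\<zero>\<^bsub>R\<^esub>, x) \<otimes>\<^bsub>nr_prod R S\<^esub> (\<zero>\<^bsub>R\<^esub>, y)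
            \<in> set_mult (nr_prod R S) (A \<inter> prod_grading NG MG g) (B \<inter> prod_grading NG MG h)"
        unfolding set_mult_def using xA yB by blast
      then have "(\<zero>\<^bsub>R\<^esub>, x) \<otimes>\<^bsub>nr_prod R S\<^esub> (\<zero>\<^bsub>R\<^esub>, y) \<in> (carrier R \<times> Q) \<inter> prod_grading NG MG (g * h)"
        using incl by blast
      then show "z \<in> Q \<inter> MG (g * h)" using z unfolding prod_grading_def by simp
    qed
    then have "snd ` A \<inter> MG g \<subseteq> Q \<inter> MG g \<or> snd ` B \<inter> MG h \<subseteq> Q \<inter> MG h"
      using Qprime[OF iA1 iB1] by blast
    moreover have "A \<subseteq> carrier R \<times> carrier S" "B \<subseteq> carrier R \<times> carrier S"
      using nr_ideal_subset[OF iA] nr_ideal_subset[OF iB] by auto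
    moreover have c: "A' \<inter> prod_grading NG MG k \<subseteq> (carrier R \<times> Q) \<inter> prod_grading NG MG k"
      if h1: "snd ` A' \<inter> MG k \<subseteq> Q \<inter> MG k" and AS: "A' \<subseteq> carrier R \<times> carrier S" for A' k
    proof
      fix p assume p: "p \<in> A' \<inter> prod_grading NG MG k"
      have "snd p \<in> snd ` A' \<inter> MG k" using p unfolding prod_grading_def by (auto simp: mem_Times_iff)
      then have "snd p \<in> Q" using h1 by blast
      moreover have "fst p \<in> carrier R" using p AS by (auto simp: mem_Times_iff)
      ultimately show "p \<in> (carrier R \<times> Q) \<inter> prod_grading NG MG k" using p by (auto simp: mem_Times_iff)
    qed
    ultimately show ?thesis by blast
  qed
  show ?thesis unfolding graded_prime_def
  proof (intro conjI allI impI)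
    show "graded_ideal (nr_prod R S) (prod_grading NG MG) (carrier R \<times> Q)" by (rule gI)
    show "carrier R \<times> Q \<noteq> carrier (nr_prod R S)" by (rule ne)
  next
    fix A B g h
    assume "nr_ideal (nr_prod R S) A" "nr_ideal (nr_prod R S) B"
      "A \<inter> prod_grading NG MG g <#>\<^bsub>nr_prod R S\<^esub> B \<inter> prod_grading NG MG h
         \<subseteq> carrier R \<times> Q \<inter> prod_grading NG MG (g * h)"
    then show "A \<inter> prod_grading NG MG g \<subseteq> carrier R \<times> Q \<inter> prod_grading NG MG g \<or>
           B \<inter> prod_grading NG MG h \<subseteq> carrier R \<times> Q \<inter> prod_grading NG MG h"
      by (rule prime)
  qed
qed

end

lemma graded_prime_ideal: "graded_prime R NG P \<Longrightarrow> nr_ideal R P"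
  unfolding graded_prime_def graded_ideal_def by blast

theorem corollary2p19:
  fixes R :: "('a, 'm) ring_scheme" and S :: "('b, 'n) ring_scheme"
    and NG :: "'g::monoid_mult \<Rightarrow> 'a set" and MG :: "'g \<Rightarrow> 'b set"
  assumes "graded_near_ring R NG" and "monoid R"
    and "graded_near_ring S MG" and "monoid S"
    and "proper_ideals_prod_graded_primes R NG"
    and "proper_ideals_prod_graded_primes S MG"
  shows "proper_ideals_prod_graded_primes (nr_prod R S) (prod_grading NG MG)"
proof -
  have gR: "graded_near_ring R NG" and mR: "monoid R" and gS: "graded_near_ring S MG" and mS: "monoid S"
    using assms by blast+
  have nR: "near_ring R" using gR unfolding graded_near_ring_def by blast
  have nS: "near_ring S" using gS unfolding graded_near_ring_def by blast
  have hR: "\<And>I. nr_ideal R I \<Longrightarrow> I \<noteq> carrier R \<Longrightarrow>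
     \<exists>Ps. Ps \<noteq> [] \<and> (\<forall>P\<in>set Ps. graded_prime R NG P) \<and> I = ideal_list_prod R Ps"
    using assms(5) unfolding proper_ideals_prod_graded_primes_def by blast
  have hS: "\<And>I. nr_ideal S I \<Longrightarrow> I \<noteq> carrier S \<Longrightarrow>
     \<exists>Ps. Ps \<noteq> [] \<and> (\<forall>P\<in>set Ps. graded_prime S MG P) \<and> I = ideal_list_prod S Ps"
    using assms(6) unfolding proper_ideals_prod_graded_primes_def by blast
  show ?thesis unfolding proper_ideals_prod_graded_primes_def
  proof (intro allI impI, elim conjE)
    fix I assume iI: "nr_ideal (nr_prod R S) I" and ne: "I \<noteq> carrier (nr_prod R S)"
    define I1 where "I1 = fst ` I"
    define I2 where "I2 = snd ` I"
    have iI1: "nr_ideal R I1" unfolding I1_def using nr_ideal_fst[OF nR nS mR iI] .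
    have iI2: "nr_ideal S I2" unfolding I2_def using nr_ideal_snd[OF nR nS mS iI] .
    have dec: "I = I1 \<times> I2" unfolding I1_def I2_def using ideal_decomp[OF nR nS mR mS iI] .
    obtain Ps where Ps1: "I1 = carrier R \<Longrightarrow> Ps = []"
      and Ps2: "I1 \<noteq> carrier R \<Longrightarrow> Ps \<noteq> [] \<and> I1 = ideal_list_prod R Ps"
      and Psp: "\<forall>P\<in>set Ps. graded_prime R NG P"
    proof (cases "I1 = carrier R")
      case True
      then show ?thesis using that[of "[]"] by simp
    next
      case False
      then obtain Ps where "Ps \<noteq> [] \<and> (\<forall>P\<in>set Ps. graded_prime R NG P) \<and> I1 = ideal_list_prod R Ps"
        using hR[OF iI1] by blast
      then show ?thesis using that[of Ps] False by blast
    qed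
    obtain Qs where Qs1: "I2 = carrier S \<Longrightarrow> Qs = []"
      and Qs2: "I2 \<noteq> carrier S \<Longrightarrow> Qs \<noteq> [] \<and> I2 = ideal_list_prod S Qs"
      and Qsp: "\<forall>Q\<in>set Qs. graded_prime S MG Q"
    proof (cases "I2 = carrier S")
      case True
      then show ?thesis using that[of "[]"] by simp
    next
      case False
      then obtain Qs where "Qs \<noteq> [] \<and> (\<forall>P\<in>set Qs. graded_prime S MG P) \<and> I2 = ideal_list_prod S Qs"
        using hS[OF iI2] by blast
      then show ?thesis using that[of Qs] False by blast
    qed
    have notboth: "I1 \<noteq> carrier R \<or> I2 \<noteq> carrier S" using ne dec by auto
    define L where "L = map (\<lambda>P. (P, carrier S)) Ps @ map (\<lambda>Q. (carrier R, Q)) Qs"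
    have Lne: "L \<noteq> []" unfolding L_def using notboth Ps2 Qs2 by auto
    have fstL: "map fst L = Ps @ replicate (length Qs) (carrier R)"
      unfolding L_def by (simp add: comp_def map_replicate_const)
    have sndL: "map snd L = replicate (length Ps) (carrier S) @ Qs"
      unfolding L_def by (simp add: comp_def map_replicate_const)
    have iPs: "\<forall>P\<in>set Ps. nr_ideal R P" using Psp graded_prime_ideal by blast
    have iQs: "\<forall>Q\<in>set Qs. nr_ideal S Q" using Qsp graded_prime_ideal by blast
    have e1: "ideal_list_prod R (map fst L) = I1"
    proof (cases "I1 = carrier R")
      case True
      then have "Ps = []" by (rule Ps1)
      then have "Qs \<noteq> []" using Lne unfolding L_def by simp
      then show ?thesis unfolding fstL using \<open>Ps = []\<close> True ideal_list_prod_replicate[OF nR mR] by simp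
    next
      case False
      then have "Ps \<noteq> []" "I1 = ideal_list_prod R Ps" using Ps2 by blast+
      then show ?thesis unfolding fstL
        using ideal_list_prod_append_replicate[OF nR mR _ _ iPs] by (cases "Qs = []") auto
    qed
    have e2: "ideal_list_prod S (map snd L) = I2"
    proof (cases "I2 = carrier S")
      case True
      then have "Qs = []" by (rule Qs1)
      then have "Ps \<noteq> []" using Lne unfolding L_def by simp
      then show ?thesis unfolding sndL using \<open>Qs = []\<close> True ideal_list_prod_replicate[OF nS mS] by simp
    next
      case False
      then have "Qs \<noteq> []" "I2 = ideal_list_prod S Qs" using Qs2 by blast+
      then show ?thesis unfolding sndL
        using ideal_list_prod_replicate_append[OF nS mS _ iQs] by simp
    qed
    define Ls where "Ls = map (\<lambda>(U, V). U \<times> V) L"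
    have "Ls \<noteq> []" unfolding Ls_def using Lne by simp
    moreover have "\<forall>P\<in>set Ls. graded_prime (nr_prod R S) (prod_grading NG MG) P"
      unfolding Ls_def L_def
      using graded_prime_left[OF nR nS mR gS] graded_prime_right[OF nR nS mS gR] Psp Qsp by auto
    moreover have "I = ideal_list_prod (nr_prod R S) Ls"
      unfolding Ls_def ideal_list_prod_pairs[OF Lne] e1 e2 dec ..
    ultimately show "\<exists>Ps. Ps \<noteq> [] \<and> (\<forall>P\<in>set Ps. graded_prime (nr_prod R S) (prod_grading NG MG) P) \<and>
        I = ideal_list_prod (nr_prod R S) Ps" by blast
  qed
qed

end
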